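(* Let $\epsilon\in(0,1)$, let $K\ge1$, and let $T\ge2$ be an integer. Let $\bar A=[\bar a,\bar b)\times[0,\infty)$ with integers $\bar a<\bar b$. Let $\bar{\mathcal{W}}$ be a finite set of rows of an RCP instance such that every row $W\in\bar{\mathcal{W}}$ spans $\bar A$, i.e., there exist $R,R'\in W$ with $\mathrm{left}(R)\le\bar a$ and $\mathrm{right}(R')\ge\bar b$. For a real $c'>0$ and an integer $p'$, let $\bar{\mathcal{W}}^{c',p'}$ be the set of rows $W\in\bar{\mathcal{W}}$ whose leftmost rectangle $R$ satisfies $c(R)=c'$ and $(1+\epsilon)^{p'}\le p(R)<(1+\epsilon)^{p'+1}$. Let $\mathcal{G}$ be any set of pairs $(c',p')$ containing every pair with $\bar{\mathcal{W}}^{c',p'}\neq\emptyset$. Let $\bar S\subseteq\bigcup_{W\in\bar{\mathcal{W}}}W$ contain a prefix of each row $W\in\bar{\mathcal W}$ (if $R\in\bar S\cap W$ then every $R'\in W$ with $\mathrm{right}(R')\le\mathrm{left}(R)$ is in $\bar S$), and let $\bar n^{c',p'}:=|\{W\in\bar{\mathcal{W}}^{c',p'}:W\cap\bar S\ne\emptyset\}|$. Then there exists a step function $\bar f:\bar A\to\{0,1,\dots,\sum_{R}p(R)\}$ with $O((K|\mathcal{G}|\log T/\epsilon)^2)$ steps such that for all integers $t,s$ with $(t,s)\in\bar A$, $$\bar f(t,s)\le\sum_{R\in\bar S:R\cap L(s,t)\ne\emptyset}p(R)\le\bar f(t,s)+\sum_{(c',p')}(1+\epsilon)^{p'}\left\lfloor\frac{\epsilon}{2K\log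 T}\bar n^{c',p'}\right\rfloor,$$ where the last sum ranges over all pairs $(c',p')$ for which some rectangle in some row of $\bar{\mathcal{W}}^{c',p'}$ intersects $L(s,t)$.
   Context: RCP rectangles and rows: each rectangle is $R=[a,b)\times[j,j+1)$ with $a<b$, $a,b,j\in\mathbb{N}_0$, $\mathrm{left}(R)=a$, $\mathrm{right}(R)=b$, cost $c(R)>0$ and value $p(R)>0$; rectangles are pairwise disjoint; the rectangles with the same $j$ form a row, all rectangles of a row have the same value and are consecutive along the $x$-axis (no gaps). The ray $L(s,t)$ for $s,t\in\mathbb{N}_0$ is $\{t\}\times(-\infty,s]$; a rectangle $[a,b)\times[j,j+1)$ intersects $L(s,t)$ iff $a\le t<b$ and $j\le s$. A step function on $\bar A$ with $k$ steps is a function for which there is a partition of $\bar A$ into $k$ axis-parallel rectangles of the form $[x^L,x^R)\times[y^B,y^T)$ (with $x^L,x^R,y^B\in\mathbb{N}_0$, $y^T\in\mathbb{N}_0\cup\{\infty\}$) on each of which the function is constant. The sum $\sum_R p(R)$ in the codomain is over all rectangles of the rows in $\bar{\mathcal W}$. *)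

theory Defs
  imports Complex_Main
begin

text \<open>A rectangle [left, right) x [ypos, ypos+1) with cost and (integer) value.\<close>
record rect =
  left :: nat
  right :: nat
  ypos :: nat
  cost :: real
  val :: nat

definition row_of :: "rect set \<Rightarrow> nat \<Rightarrow> rect set" where
  "row_of I j = {R \<in> I. ypos R = j}"

definition rows :: "rect set \<Rightarrow> rect set set" where
  "rows I = {W. \<exists>j. W = row_of I j \<and> W \<noteq> {}}"

definition rcp_instance :: "rect set \<Rightarrow> bool" where
  "rcp_instance I \<longleftrightarrow> finite I
    \<and> (\<forall>R\<in>I. left R < right R \<and> cost R > 0 \<and> val R > 0)
    \<and> (\<forall>R\<in>I. \<forall>R'\<in>I. R \<noteq> R' \<longrightarrow>
          ypos R \<noteq> ypos R' \<or> right R \<le> left R' \<or> right R' \<le> left R)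
    \<and> (\<forall>W\<in>rows I. \<forall>R\<in>W. \<forall>R'\<in>W. val R = val R')
    \<and> (\<forall>W\<in>rows I. \<forall>x::nat. (\<exists>R\<in>W. left R \<le> x) \<and> (\<exists>R\<in>W. x < right R)
          \<longrightarrow> (\<exists>R\<in>W. left R \<le> x \<and> x < right R))"

text \<open>R intersects the ray L(s,t) = {t} x (-inf, s].\<close>
definition hits_ray :: "rect \<Rightarrow> nat \<Rightarrow> nat \<Rightarrow> bool" where
  "hits_ray R s t \<longleftrightarrow> left R \<le> t \<and> t < right R \<and> ypos R \<le> s"

text \<open>Axis-parallel boxes [xL,xR) x [yB,yT), yT = None meaning infinity.\<close>
type_synonym box = "nat \<times> nat \<times> nat \<times> nat option"

definition in_box :: "nat \<times> nat \<Rightarrow> box \<Rightarrow> bool" where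
  "in_box pt B = (case B of (xL, xR, yB, yT) \<Rightarrow>
      xL \<le> fst pt \<and> fst pt < xR \<and> yB \<le> snd pt
      \<and> (case yT of None \<Rightarrow> True | Some yt \<Rightarrow> snd pt < yt))"

text \<open>f is a step function on [a,b) x [0,inf) with k steps (integer corners, so it
  suffices to consider lattice points).\<close>
definition step_function_on :: "nat \<Rightarrow> nat \<Rightarrow> (nat \<times> nat \<Rightarrow> 'v) \<Rightarrow> nat \<Rightarrow> bool" where
  "step_function_on a b f k \<longleftrightarrow> (\<exists>Bs::box list. length Bs = k
     \<and> (\<forall>B\<in>set Bs. \<forall>pt. in_box pt B \<longrightarrow> a \<le> fst pt \<and> fst pt < b)
     \<and> (\<forall>x y. a \<le> x \<and> x < b \<longrightarrow> (\<exists>!i. i < k \<and> in_box (x, y) (Bs ! i)))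
     \<and> (\<forall>i<k. \<forall>p q. in_box p (Bs ! i) \<longrightarrow> in_box q (Bs ! i) \<longrightarrow> f p = f q))"

definition row_class :: "real \<Rightarrow> rect set set \<Rightarrow> real \<Rightarrow> int \<Rightarrow> rect set set" where
  "row_class eps Ws c' p' = {W \<in> Ws. \<exists>R\<in>W. (\<forall>R'\<in>W. left R \<le> left R')
      \<and> cost R = c' \<and> (1 + eps) powr (real_of_int p') \<le> real (val R)
      \<and> real (val R) < (1 + eps) powr (real_of_int p' + 1)}"

end

theory Submission
  imports Defs
begin


lemma sparse_points:
  fixes e :: "'a \<Rightarrow> nat"
  assumes "finite A"
  shows "\<exists>X::nat set. finite X \<and> card X \<le> card A div Suc q \<and>
     (\<forall>u v. (\<forall>x\<in>X. \<not> (u < x \<and> x < v)) \<longrightarrow> card {i\<in>A. u < e i \<and> e i < v} \<le> q)"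
  using assms
proof (induction "card A" arbitrary: A rule: less_induct)
  case less
  show ?case
  proof (cases "card A \<le> q")
    case True
    have "card {i\<in>A. u < e i \<and> e i < v} \<le> q" for u v
      using card_mono[OF less.prems, of "{i\<in>A. u < e i \<and> e i < v}"] True by auto
    then show ?thesis by (intro exI[of _ "{}"]) auto
  next
    case False
    define P where "P = (\<lambda>v. Suc q \<le> card {i\<in>A. e i \<le> v})"
    have Pex: "P (Max (e ` A))"
    proof -
      have "{i\<in>A. e i \<le> Max (e ` A)} = A" using less.prems by auto
      then show ?thesis using False unfolding P_def by auto
    qed
    define m0 where "m0 = (LEAST v. P v)"
    have Pm0: "P m0" unfolding m0_def by (rule LeastI[of P, OF Pex])
    define A' where "A' = {i\<in>A. m0 < e i}"
    have fA': "finite A'" using less.prems unfolding A'_def by auto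
    have split: "A = A' \<union> {i\<in>A. e i \<le> m0}" "A' \<inter> {i\<in>A. e i \<le> m0} = {}"
      unfolding A'_def by auto
    have cA: "card A = card A' + card {i\<in>A. e i \<le> m0}"
      using split card_Un_disjoint[OF fA', of "{i\<in>A. e i \<le> m0}"] less.prems by auto
    have cA2: "card A' + Suc q \<le> card A" using cA Pm0 unfolding P_def by auto
    then have "card A' < card A" by auto
    from less.hyps[OF this fA'] obtain X' where X':
      "finite X'" "card X' \<le> card A' div Suc q"
      "\<forall>u v. (\<forall>x\<in>X'. \<not> (u < x \<and> x < v)) \<longrightarrow> card {i\<in>A'. u < e i \<and> e i < v} \<le> q"
      by blast
    have "card (insert m0 X') \<le> Suc (card A' div Suc q)"
      using X'(1,2) card_insert_le_m1 by (simp add: card_insert_if)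
    also have "\<dots> = (card A' + Suc q) div Suc q" by (subst div_add_self2) auto
    also have "\<dots> \<le> card A div Suc q" using cA2 div_le_mono by blast
    finally have cX: "card (insert m0 X') \<le> card A div Suc q" .
    have prp: "card {i\<in>A. u < e i \<and> e i < v} \<le> q"
      if nox: "\<forall>x\<in>insert m0 X'. \<not> (u < x \<and> x < v)" for u v
    proof -
      have "v \<le> m0 \<or> m0 \<le> u" using nox by auto
      then show ?thesis
      proof
        assume vm: "v \<le> m0"
        show ?thesis
        proof (cases "m0 = 0")
          case True
          then have "{i\<in>A. u < e i \<and> e i < v} = {}" using vm by auto
          then show ?thesis by (metis card.empty zero_le)
        next
          case False
          have "\<not> P (m0 - 1)" using False unfolding m0_def
            by (metis diff_less not_less_Least zero_less_one not_gr_zero)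
          then have c1: "card {i\<in>A. e i \<le> m0 - 1} \<le> q" unfolding P_def by auto
          have "{i\<in>A. u < e i \<and> e i < v} \<subseteq> {i\<in>A. e i \<le> m0 - 1}" using vm by auto
          then have "card {i\<in>A. u < e i \<and> e i < v} \<le> card {i\<in>A. e i \<le> m0 - 1}"
            using less.prems by (intro card_mono) auto
          then show ?thesis using c1 by linarith
        qed
      next
        assume mu: "m0 \<le> u"
        have "{i\<in>A. u < e i \<and> e i < v} = {i\<in>A'. u < e i \<and> e i < v}"
          using mu unfolding A'_def by auto
        then show ?thesis using X'(3) nox by auto
      qed
    qed
    show ?thesis
      by (rule exI[of _ "insert m0 X'"]) (use X'(1) cX prp in auto)
  qed
qed



lemma grid_step:
  fixes X Y :: "nat set" and g :: "nat \<Rightarrow> nat \<Rightarrow> 'v"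
  assumes fX: "finite X" and fY: "finite Y" and aX: "a \<in> X" and bX: "b \<in> X"
    and Xab: "X \<subseteq> {a..b}" and ab: "a < b" and Y0: "0 \<in> Y"
  shows "step_function_on a b (\<lambda>p. g (Min {x\<in>X. fst p < x}) (Max {y\<in>Y. y \<le> snd p}))
           ((card X - 1) * card Y)"
proof -
  define nx where "nx t = Min {x\<in>X. t < x}" for t
  define px where "px t = Max {x\<in>X. x \<le> t}" for t
  define py where "py s = Max {y\<in>Y. y \<le> s}" for s
  define ny where "ny y = (if \<exists>z\<in>Y. y < z then Some (Min {z\<in>Y. y < z}) else None)" for y
  define bx where "bx = (\<lambda>(x::nat,y::nat). (x, nx x, y, ny y))"
  define Dom where "Dom = (X - {b}) \<times> Y"
  have fD: "finite Dom" unfolding Dom_def using fX fY by auto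
  obtain L where setL: "set L = Dom" and dL: "distinct L" using finite_distinct_list[OF fD] by blast
  define Bs where "Bs = map bx L"
  have lenBs: "length Bs = (card X - 1) * card Y"
    unfolding Bs_def using distinct_card[OF dL] setL bX fX by (simp add: Dom_def card_cartesian_product)
  have nx_prop: "x < nx x \<and> nx x \<in> X \<and> nx x \<le> b \<and> (\<forall>z\<in>X. x < z \<longrightarrow> nx x \<le> z)"
    if "x \<in> X" "x \<noteq> b" for x
  proof -
    have "x < b" using that Xab by fastforce
    then have ne: "{z\<in>X. x < z} \<noteq> {}" using bX by auto
    have f: "finite {z\<in>X. x < z}" using fX by auto
    show ?thesis unfolding nx_def using Min_in[OF f ne] Min_le[OF f] bX \<open>x < b\<close> by auto
  qed
  have px_prop: "px t \<in> X \<and> px t \<le> t \<and> (\<forall>z\<in>X. z \<le> t \<longrightarrow> z \<le> px t)" if "a \<le> t" for t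
  proof -
    have ne: "{z\<in>X. z \<le> t} \<noteq> {}" using aX that by auto
    have f: "finite {z\<in>X. z \<le> t}" using fX by auto
    show ?thesis unfolding px_def using Max_in[OF f ne] Max_ge[OF f] by auto
  qed
  have py_prop: "py s \<in> Y \<and> py s \<le> s \<and> (\<forall>z\<in>Y. z \<le> s \<longrightarrow> z \<le> py s)" for s
  proof -
    have ne: "{z\<in>Y. z \<le> s} \<noteq> {}" using Y0 by auto
    have f: "finite {z\<in>Y. z \<le> s}" using fY by auto
    show ?thesis unfolding py_def using Max_in[OF f ne] Max_ge[OF f] by auto
  qed
  have Kx: "(x \<le> t \<and> t < nx x) \<longleftrightarrow> (a \<le> t \<and> t < b \<and> px t = x)"
    if "x \<in> X" "x \<noteq> b" for x t
  proof
    assume h: "x \<le> t \<and> t < nx x"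
    have "a \<le> x" using that Xab by auto
    then have at: "a \<le> t" using h by auto
    moreover have "t < b" using h nx_prop[OF that] by auto
    moreover have "px t = x"
    proof -
      have "z \<le> x" if "z \<in> X" "z \<le> t" for z
        using nx_prop[OF \<open>x \<in> X\<close> \<open>x \<noteq> b\<close>] that h by (meson le_trans not_le)
      then show ?thesis using px_prop[OF at] h that by (meson antisym)
    qed
    ultimately show "a \<le> t \<and> t < b \<and> px t = x" by auto
  next
    assume h: "a \<le> t \<and> t < b \<and> px t = x"
    have "x \<le> t" using px_prop[of t] h by auto
    moreover have "t < nx x"
    proof (rule ccontr)
      assume "\<not> t < nx x"
      then have "nx x \<le> px t" using px_prop[of t] h nx_prop[OF that] by auto
      then show False using h nx_prop[OF that] by auto
    qed
    ultimately show "x \<le> t \<and> t < nx x" by auto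
  qed
  have Ky: "(y \<le> s \<and> (case ny y of None \<Rightarrow> True | Some z \<Rightarrow> s < z)) \<longleftrightarrow> py s = y"
    if "y \<in> Y" for y s
  proof
    assume h: "y \<le> s \<and> (case ny y of None \<Rightarrow> True | Some z \<Rightarrow> s < z)"
    have "z \<le> y" if "z \<in> Y" "z \<le> s" for z
    proof (rule ccontr)
      assume "\<not> z \<le> y"
      then have ex: "\<exists>z\<in>Y. y < z" using that not_le by blast
      have f: "finite {z\<in>Y. y < z}" using fY by auto
      have "Min {z\<in>Y. y < z} \<le> z" using Min_le[OF f] that \<open>\<not> z \<le> y\<close> by auto
      moreover have "s < Min {z\<in>Y. y < z}" using h ex unfolding ny_def by auto
      ultimately show False using that by auto
    qed
    then show "py s = y" using py_prop[of s] h \<open>y \<in> Y\<close> by (meson antisym)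
  next
    assume h: "py s = y"
    have "y \<le> s" using py_prop[of s] h by auto
    moreover have "s < z" if "ny y = Some z" for z
    proof -
      have ex: "\<exists>z\<in>Y. y < z" using that unfolding ny_def by (auto split: if_splits)
      have f: "finite {z\<in>Y. y < z}" using fY by auto
      have zz: "z = Min {z\<in>Y. y < z}" using that ex unfolding ny_def by auto
      have "z \<in> Y" "y < z" using Min_in[OF f] ex zz by auto
      then show ?thesis using py_prop[of s] h by (meson not_le)
    qed
    ultimately show "y \<le> s \<and> (case ny y of None \<Rightarrow> True | Some z \<Rightarrow> s < z)"
      by (auto split: option.splits)
  qed
  have inbox: "in_box (t, s) (bx d) \<longleftrightarrow> a \<le> t \<and> t < b \<and> d = (px t, py s)" if dD: "d \<in> Dom" for d t s
  proof -
    obtain x y where d: "d = (x, y)" "x \<in> X" "x \<noteq> b" "y \<in> Y" using dD unfolding Dom_def by auto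
    have "in_box (t, s) (bx d) \<longleftrightarrow> (x \<le> t \<and> t < nx x) \<and> (y \<le> s \<and> (case ny y of None \<Rightarrow> True | Some z \<Rightarrow> s < z))"
      unfolding in_box_def bx_def d by (auto split: option.splits)
    also have "\<dots> \<longleftrightarrow> a \<le> t \<and> t < b \<and> d = (px t, py s)"
      using Kx[OF d(2,3), of t] Ky[OF d(4), of s] d(1) by auto
    finally show ?thesis .
  qed
  have nxpx: "nx t = nx (px t)" if "a \<le> t" "t < b" for t
  proof -
    have px: "px t \<in> X" "px t \<noteq> b" "px t \<le> t" using px_prop[OF that(1)] that by auto
    have lt: "t < nx (px t)" using Kx[OF px(1,2), of t] that by auto
    have f: "finite {x\<in>X. t < x}" using fX by auto
    have "nx (px t) \<le> z" if "z \<in> X" "t < z" for z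
      using nx_prop[OF px(1,2)] that px(3) by auto
    moreover have "nx (px t) \<in> {x\<in>X. t < x}" using nx_prop[OF px(1,2)] lt by auto
    ultimately show ?thesis unfolding nx_def[of t]
      by (metis (mono_tags, lifting) Min_eqI f mem_Collect_eq nx_def)
  qed
  show ?thesis
    unfolding step_function_on_def
  proof (intro exI[of _ Bs] conjI allI impI ballI)
    show "length Bs = (card X - 1) * card Y" by (rule lenBs)
  next
    fix B pt assume B: "B \<in> set Bs" and ib: "in_box pt B"
    obtain d where d: "d \<in> Dom" "B = bx d" using B setL unfolding Bs_def by auto
    obtain t s where pt: "pt = (t, s)" by fastforce
    show "a \<le> fst pt" using inbox[OF d(1)] ib d pt by auto
  next
    fix B pt assume B: "B \<in> set Bs" and ib: "in_box pt B"
    obtain d where d: "d \<in> Dom" "B = bx d" using B setL unfolding Bs_def by auto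
    obtain t s where pt: "pt = (t, s)" by fastforce
    show "fst pt < b" using inbox[OF d(1)] ib d pt by auto
  next
    fix x y assume xy: "a \<le> x \<and> x < b"
    have mem: "(px x, py y) \<in> Dom" unfolding Dom_def using px_prop[of x] py_prop[of y] xy by auto
    have eq: "(i < (card X - 1) * card Y \<and> in_box (x, y) (Bs ! i)) \<longleftrightarrow> (i < length L \<and> L ! i = (px x, py y))" for i
    proof -
      have ll: "length L = (card X - 1) * card Y" using lenBs unfolding Bs_def by simp
      show ?thesis
      proof (cases "i < length L")
        case True
        then have "L ! i \<in> Dom" using setL by auto
        from inbox[OF this, of x y] show ?thesis using True xy ll unfolding Bs_def by auto
      next
        case False
        then show ?thesis using ll by auto
      qed
    qed
    show "\<exists>!i. i < (card X - 1) * card Y \<and> in_box (x, y) (Bs ! i)"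
      unfolding eq using distinct_Ex1[OF dL] mem setL by auto
  next
    fix i p q assume i: "i < (card X - 1) * card Y" and ip: "in_box p (Bs ! i)" and iq: "in_box q (Bs ! i)"
    have d: "L ! i \<in> Dom" "Bs ! i = bx (L ! i)" using i lenBs setL unfolding Bs_def by auto
    show "g (Min {x\<in>X. fst p < x}) (Max {y\<in>Y. y \<le> snd p}) = g (Min {x\<in>X. fst q < x}) (Max {y\<in>Y. y \<le> snd q})"
    proof -
      have c: "g (Min {x\<in>X. fst r < x}) (Max {y\<in>Y. y \<le> snd r}) = g (nx (fst (L ! i))) (snd (L ! i))"
        if "in_box r (Bs ! i)" for r
      proof -
        obtain t s where r: "r = (t, s)" by fastforce
        have h: "a \<le> t" "t < b" "L ! i = (px t, py s)" using inbox[OF d(1)] that d(2) r by auto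
        show ?thesis using nxpx[OF h(1,2)] h(3) r unfolding nx_def py_def by auto
      qed
      show ?thesis using c[OF ip] c[OF iq] by simp
    qed
  qed
qed



lemma main19:
  fixes eps K :: real and T a b :: nat and I :: "rect set" and Ws :: "rect set set"
    and G :: "(real \<times> int) set" and S :: "rect set"
  assumes eps: "0 < eps" "eps < 1" and K: "K \<ge> 1" and T: "T \<ge> 2" and ab: "a < b"
  and I: "rcp_instance I" and WsI: "Ws \<subseteq> rows I" and fWs: "finite Ws"
  and span: "\<forall>W\<in>Ws. \<exists>R\<in>W. \<exists>R'\<in>W. left R \<le> a \<and> b \<le> right R'"
  and fG: "finite G" and GP: "{(c', p'). row_class eps Ws c' p' \<noteq> {}} \<subseteq> G"
  and SW: "S \<subseteq> \<Union>Ws"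
  and pref: "\<forall>W\<in>Ws. \<forall>R\<in>S \<inter> W. \<forall>R'\<in>W. right R' \<le> left R \<longrightarrow> R' \<in> S"
  shows "\<exists>(f::nat \<times> nat \<Rightarrow> nat) k.
            step_function_on a b f k
          \<and> real k \<le> 81 * max 1 ((K * real (card G) * log 2 (real T) / eps) ^ 2)
          \<and> (\<forall>t s. a \<le> t \<and> t < b \<longrightarrow>
               f (t, s) \<le> (\<Sum>R\<in>\<Union>Ws. val R)
             \<and> f (t, s) \<le> (\<Sum>R\<in>{R\<in>S. hits_ray R s t}. val R)
             \<and> real (\<Sum>R\<in>{R\<in>S. hits_ray R s t}. val R)
                 \<le> real (f (t, s))
                   + (\<Sum>(c', p')\<in>{(c', p'). \<exists>W\<in>row_class eps Ws c' p'. \<exists>R\<in>W. hits_ray R s t}.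
                        (1 + eps) powr (real_of_int p')
                        * of_int \<lfloor>eps / (2 * K * log 2 (real T))
                             * real (card {W \<in> row_class eps Ws c' p'. W \<inter> S \<noteq> {}})\<rfloor>))"
proof -
  have fI: "finite I" and Iprop: "\<And>R. R \<in> I \<Longrightarrow> left R < right R \<and> cost R > 0 \<and> val R > 0"
    using I unfolding rcp_instance_def by auto
  have rowW: "\<exists>j. W = row_of I j \<and> W \<noteq> {}" if "W \<in> Ws" for W
    using that WsI unfolding rows_def by auto
  have inI: "R \<in> I" if "W \<in> Ws" "R \<in> W" for W R
    using rowW[OF that(1)] that(2) unfolding row_of_def by auto
  have sameY: "ypos R = ypos R'" if "W \<in> Ws" "R \<in> W" "R' \<in> W" for W R R'
    using rowW[OF that(1)] that(2,3) unfolding row_of_def by auto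
  have Iv: "\<forall>W\<in>rows I. \<forall>R\<in>W. \<forall>R'\<in>W. val R = val R'"
    using I unfolding rcp_instance_def by (elim conjE) assumption
  have Id: "\<forall>R\<in>I. \<forall>R'\<in>I. R \<noteq> R' \<longrightarrow> ypos R \<noteq> ypos R' \<or> right R \<le> left R' \<or> right R' \<le> left R"
    using I unfolding rcp_instance_def by (elim conjE) assumption
  have Ic: "\<forall>W\<in>rows I. \<forall>x::nat. (\<exists>R\<in>W. left R \<le> x) \<and> (\<exists>R\<in>W. x < right R)
          \<longrightarrow> (\<exists>R\<in>W. left R \<le> x \<and> x < right R)"
    using I unfolding rcp_instance_def by (elim conjE) assumption
  have sameV: "val R = val R'" if "W \<in> Ws" "R \<in> W" "R' \<in> W" for W R R'
  proof -
    have "W \<in> rows I" using that WsI by auto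
    then show ?thesis using Iv that by blast
  qed
  have disj: "right R \<le> left R' \<or> right R' \<le> left R" if "W \<in> Ws" "R \<in> W" "R' \<in> W" "R \<noteq> R'" for W R R'
  proof -
    have "ypos R \<noteq> ypos R' \<or> right R \<le> left R' \<or> right R' \<le> left R"
      using Id inI[OF that(1,2)] inI[OF that(1,3)] that(4) by blast
    then show ?thesis using sameY[OF that(1,2,3)] by auto
  qed
  have contig: "\<exists>R\<in>W. left R \<le> x \<and> x < right R"
    if "W \<in> Ws" "\<exists>R\<in>W. left R \<le> x" "\<exists>R\<in>W. x < right R" for W x
  proof -
    have "W \<in> rows I" using that WsI by auto
    then show ?thesis using Ic that by blast
  qed
  have fW: "finite W" if "W \<in> Ws" for W
    using fI inI[OF that] by (meson finite_subset subsetI)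
  define lm :: "rect set \<Rightarrow> rect" where "lm W = (SOME R. R \<in> W \<and> (\<forall>R'\<in>W. left R \<le> left R'))" for W
  have lm_prop: "lm W \<in> W \<and> (\<forall>R'\<in>W. left (lm W) \<le> left R')" if "W \<in> Ws" for W
  proof -
    have ne: "left ` W \<noteq> {}" using rowW[OF that] by auto
    have f: "finite (left ` W)" using fW[OF that] by auto
    obtain R where "R \<in> W" "left R = Min (left ` W)" using Min_in[OF f ne] by auto
    then have "R \<in> W \<and> (\<forall>R'\<in>W. left R \<le> left R')" using Min_le[OF f] by auto
    then show ?thesis unfolding lm_def by (rule someI)
  qed
  have lm_uniq: "R = lm W" if "W \<in> Ws" "R \<in> W" "\<forall>R'\<in>W. left R \<le> left R'" for W R
  proof (rule ccontr)
    assume ne: "R \<noteq> lm W"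
    have eq: "left R = left (lm W)" using lm_prop[OF that(1)] that by (meson antisym)
    have "left R < right R" "left (lm W) < right (lm W)"
      using Iprop inI[OF that(1,2)] Iprop inI[OF that(1)] lm_prop[OF that(1)] by auto
    then show False using disj[OF that(1,2) _ ne] lm_prop[OF that(1)] eq by auto
  qed
  define vW where "vW W = val (lm W)" for W
  define yW where "yW W = ypos (lm W)" for W
  define eW where "eW W = Max (right ` (W \<inter> S))" for W
  define cls where "cls W = (cost (lm W), \<lfloor>log (1 + eps) (real (vW W))\<rfloor>)" for W
  have vpos: "0 < real (vW W)" if "W \<in> Ws" for W
    using Iprop inI[OF that] lm_prop[OF that] unfolding vW_def by auto
  have cls_iff: "W \<in> row_class eps Ws c p \<longleftrightarrow> cls W = (c, p)" if "W \<in> Ws" for W c p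
  proof -
    have "W \<in> row_class eps Ws c p \<longleftrightarrow> (cost (lm W) = c \<and> (1 + eps) powr (real_of_int p) \<le> real (vW W)
      \<and> real (vW W) < (1 + eps) powr (real_of_int p + 1))"
      unfolding row_class_def vW_def using that lm_prop[OF that] lm_uniq[OF that] by auto
    also have "\<dots> \<longleftrightarrow> cls W = (c, p)"
      unfolding cls_def using floor_log_eq_powr_iff[OF vpos[OF that], of "1 + eps" p] eps by auto
    finally show ?thesis .
  qed
  define Ws' where "Ws' = {W\<in>Ws. W \<inter> S \<noteq> {}}"
  have eW_prop: "\<exists>R0\<in>W \<inter> S. eW W = right R0" "\<forall>R\<in>W \<inter> S. right R \<le> eW W" if "W \<in> Ws'" for W
  proof -
    have W: "W \<in> Ws" and ne: "W \<inter> S \<noteq> {}" using that unfolding Ws'_def by auto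
    have f: "finite (right ` (W \<inter> S))" using fW[OF W] by auto
    have ne': "right ` (W \<inter> S) \<noteq> {}" using ne by auto
    show "\<exists>R0\<in>W \<inter> S. eW W = right R0" using Min_in Max_in[OF f ne'] unfolding eW_def by auto
    show "\<forall>R\<in>W \<inter> S. right R \<le> eW W" using Max_ge[OF f] unfolding eW_def by auto
  qed
  have F1: "(\<exists>R\<in>W \<inter> S. hits_ray R s t) \<longleftrightarrow> (yW W \<le> s \<and> t < eW W)"
    if WW: "W \<in> Ws'" and at: "a \<le> t" for W s t
  proof
    have W: "W \<in> Ws" using WW unfolding Ws'_def by auto
    assume "\<exists>R\<in>W \<inter> S. hits_ray R s t"
    then obtain R where R: "R \<in> W \<inter> S" "hits_ray R s t" by auto
    have "R \<in> W" using R(1) by blast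
    have "yW W = ypos R" unfolding yW_def using sameY[OF W \<open>R \<in> W\<close> conjunct1[OF lm_prop[OF W]]] by simp
    moreover have "t < eW W"
    proof -
      have "right R \<le> eW W" using eW_prop(2)[OF WW] R(1) by blast
      then show ?thesis using R(2) unfolding hits_ray_def by linarith
    qed
    ultimately show "yW W \<le> s \<and> t < eW W" using R unfolding hits_ray_def by auto
  next
    have W: "W \<in> Ws" using WW unfolding Ws'_def by auto
    assume h: "yW W \<le> s \<and> t < eW W"
    obtain R0 where R0: "R0 \<in> W \<inter> S" "eW W = right R0" using eW_prop(1)[OF WW] by auto
    obtain R1 where R1: "R1 \<in> W" "left R1 \<le> a" using span W by auto
    have e1: "\<exists>R\<in>W. left R \<le> t" using R1 at by (meson le_trans)
    have e2: "\<exists>R\<in>W. t < right R" using R0 h by auto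
    obtain R where R: "R \<in> W" "left R \<le> t" "t < right R"
      using contig[OF W e1 e2] by blast
    have RS: "R \<in> S"
    proof (cases "R = R0")
      case True then show ?thesis using R0 by auto
    next
      case False
      from disj[OF W R(1) _ False] R0 have "right R \<le> left R0 \<or> right R0 \<le> left R" by auto
      then show ?thesis
      proof
        assume "right R \<le> left R0"
        moreover have "R0 \<in> S \<inter> W" using R0 by blast
        ultimately show ?thesis using pref[rule_format, OF W \<open>R0 \<in> S \<inter> W\<close> R(1)] by blast
      next
        assume "right R0 \<le> left R"
        then show ?thesis using R h R0 by auto
      qed
    qed
    have "ypos R = yW W" unfolding yW_def using sameY[OF W R(1) conjunct1[OF lm_prop[OF W]]] .
    then show "\<exists>R\<in>W \<inter> S. hits_ray R s t" using R RS h unfolding hits_ray_def by auto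
  qed
  have F1b: "card {R\<in>W \<inter> S. hits_ray R s t} \<le> 1" if W: "W \<in> Ws" for W s t
  proof -
    have "R = R'" if "R \<in> {R\<in>W \<inter> S. hits_ray R s t}" "R' \<in> {R\<in>W \<inter> S. hits_ray R s t}" for R R'
    proof (rule ccontr)
      assume "R \<noteq> R'"
      have RW: "R \<in> W" "R' \<in> W" using that by auto
      have h: "left R \<le> t" "t < right R" "left R' \<le> t" "t < right R'"
        using that unfolding hits_ray_def by auto
      show False using disj[OF W RW \<open>R \<noteq> R'\<close>] h by linarith
    qed
    moreover have fin: "finite {R\<in>W \<inter> S. hits_ray R s t}" using fW[OF W] by auto
    ultimately have "card {R\<in>W \<inter> S. hits_ray R s t} \<le> Suc 0"
      using card_le_Suc0_iff_eq[OF fin] by blast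
    then show ?thesis by simp
  qed
  define \<Phi> where "\<Phi> t s = (\<Sum>W\<in>{W\<in>Ws'. yW W \<le> s \<and> t < eW W}. vW W)" for t s
  have fUW: "finite (\<Union>Ws)" using fWs fW by (simp add: finite_Union)
  have fWs': "finite Ws'" using fWs unfolding Ws'_def by auto
  have F2: "(\<Sum>R\<in>{R\<in>S. hits_ray R s t}. val R) = \<Phi> t s" if at: "a \<le> t" for t s
  proof -
    define H where "H = {R\<in>S. hits_ray R s t}"
    define \<rho> :: "rect \<Rightarrow> rect set" where "\<rho> R = row_of I (ypos R)" for R
    have rho: "\<rho> R = W" if "W \<in> Ws" "R \<in> W" for W R
      using rowW[OF that(1)] that(2) unfolding \<rho>_def row_of_def by auto
    have fH: "finite H" unfolding H_def using finite_subset[OF SW fUW] by simp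
    have img: "\<rho> ` H \<subseteq> Ws'"
    proof
      fix W assume "W \<in> \<rho> ` H"
      then obtain R where R: "R \<in> H" "W = \<rho> R" by auto
      obtain W' where W': "W' \<in> Ws" "R \<in> W'" using R SW unfolding H_def by auto
      have "W = W'" using rho[OF W'] R by auto
      then show "W \<in> Ws'" using W' R unfolding Ws'_def H_def by auto
    qed
    have "(\<Sum>R\<in>H. val R) = (\<Sum>W\<in>Ws'. \<Sum>R\<in>{R\<in>H. \<rho> R = W}. val R)"
      using sum.group[OF fH fWs' img, of val] by simp
    also have "\<dots> = (\<Sum>W\<in>Ws'. if yW W \<le> s \<and> t < eW W then vW W else 0)"
    proof (rule sum.cong[OF refl])
      fix W assume WW: "W \<in> Ws'"
      have W: "W \<in> Ws" using WW unfolding Ws'_def by auto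
      have eqset: "{R\<in>H. \<rho> R = W} = {R\<in>W \<inter> S. hits_ray R s t}"
      proof
        show "{R\<in>H. \<rho> R = W} \<subseteq> {R\<in>W \<inter> S. hits_ray R s t}"
        proof
          fix R assume R: "R \<in> {R\<in>H. \<rho> R = W}"
          obtain W' where W': "W' \<in> Ws" "R \<in> W'" using R SW unfolding H_def by auto
          have "W = W'" using rho[OF W'] R by auto
          then show "R \<in> {R\<in>W \<inter> S. hits_ray R s t}" using R W' unfolding H_def by auto
        qed
        show "{R\<in>W \<inter> S. hits_ray R s t} \<subseteq> {R\<in>H. \<rho> R = W}"
          using rho[OF W] unfolding H_def by auto
      qed
      have vals: "val R = vW W" if "R \<in> {R\<in>W \<inter> S. hits_ray R s t}" for R
        using sameV[OF W _ ] lm_prop[OF W] that unfolding vW_def by auto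
      have fs: "finite {R\<in>W \<inter> S. hits_ray R s t}" using fW[OF W] by auto
      have sc: "(\<Sum>R\<in>{R\<in>W \<inter> S. hits_ray R s t}. val R) = card {R\<in>W \<inter> S. hits_ray R s t} * vW W"
      proof -
        have "(\<Sum>R\<in>{R\<in>W \<inter> S. hits_ray R s t}. val R) = (\<Sum>R\<in>{R\<in>W \<inter> S. hits_ray R s t}. vW W)"
          by (rule sum.cong[OF refl vals])
        then show ?thesis by simp
      qed
      have c1: "card {R\<in>W \<inter> S. hits_ray R s t} = (if yW W \<le> s \<and> t < eW W then 1 else 0)"
      proof -
        have "card {R\<in>W \<inter> S. hits_ray R s t} \<noteq> 0 \<longleftrightarrow> yW W \<le> s \<and> t < eW W"
          using F1[OF WW at, of s] fs by auto
        then show ?thesis using F1b[OF W, of s t] by auto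
      qed
      show "(\<Sum>R\<in>{R\<in>H. \<rho> R = W}. val R) = (if yW W \<le> s \<and> t < eW W then vW W else 0)"
        using eqset sc c1 by simp
    qed
    also have "\<dots> = \<Phi> t s" unfolding \<Phi>_def
      using sum.inter_filter[OF fWs', of vW "\<lambda>W. yW W \<le> s \<and> t < eW W"] by simp
    finally show ?thesis unfolding H_def .
  qed
  define \<delta> where "\<delta> = eps / (2 * K * log 2 (real T))"
  have logT: "1 \<le> log 2 (real T)" using T by simp
  have dpos: "0 < \<delta>" unfolding \<delta>_def using eps K logT by simp
  define A where "A g = {W\<in>Ws'. cls W = g}" for g
  define n where "n g = card (A g)" for g
  define m where "m g = nat \<lfloor>\<delta> * real (n g)\<rfloor>" for g
  define q where "q g = m g div 4" for g
  have fA: "finite (A g)" for g using fWs' unfolding A_def by auto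
  have n_eq: "n (c', p') = card {W \<in> row_class eps Ws c' p'. W \<inter> S \<noteq> {}}" for c' p'
  proof -
    have "A (c', p') = {W \<in> row_class eps Ws c' p'. W \<inter> S \<noteq> {}}"
    proof (rule set_eqI)
      fix W
      have rs: "row_class eps Ws c' p' \<subseteq> Ws" unfolding row_class_def by blast
      show "W \<in> A (c', p') \<longleftrightarrow> W \<in> {W \<in> row_class eps Ws c' p'. W \<inter> S \<noteq> {}}"
      proof (cases "W \<in> Ws")
        case True
        then show ?thesis unfolding A_def Ws'_def using cls_iff[OF True, of c' p'] by (simp add: conj_commute)
      next
        case False
        then show ?thesis unfolding A_def Ws'_def using rs by blast
      qed
    qed
    then show ?thesis unfolding n_def by simp
  qed
  have "\<forall>g. \<exists>X::nat set. finite X \<and> card X \<le> card (A g) div Suc (q g) \<and>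
     (\<forall>u v. (\<forall>x\<in>X. \<not> (u < x \<and> x < v)) \<longrightarrow> card {i\<in>A g. u < eW i \<and> eW i < v} \<le> q g)"
    using sparse_points[OF fA] by blast
  from choice[OF this] obtain Xf where Xf0: "\<forall>g. finite (Xf g) \<and> card (Xf g) \<le> card (A g) div Suc (q g) \<and>
     (\<forall>u v. (\<forall>x\<in>Xf g. \<not> (u < x \<and> x < v)) \<longrightarrow> card {i\<in>A g. u < eW i \<and> eW i < v} \<le> q g)"
    by blast
  have Xf: "\<And>g. finite (Xf g)" "\<And>g. card (Xf g) \<le> card (A g) div Suc (q g)"
    "\<And>g u v. (\<forall>x\<in>Xf g. \<not> (u < x \<and> x < v)) \<Longrightarrow> card {i\<in>A g. u < eW i \<and> eW i < v} \<le> q g"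
    using Xf0 by blast+
  have "\<forall>g. \<exists>X::nat set. finite X \<and> card X \<le> card (A g) div Suc (q g) \<and>
     (\<forall>u v. (\<forall>x\<in>X. \<not> (u < x \<and> x < v)) \<longrightarrow> card {i\<in>A g. u < yW i \<and> yW i < v} \<le> q g)"
    using sparse_points[OF fA] by blast
  from choice[OF this] obtain Yf where Yf0: "\<forall>g. finite (Yf g) \<and> card (Yf g) \<le> card (A g) div Suc (q g) \<and>
     (\<forall>u v. (\<forall>x\<in>Yf g. \<not> (u < x \<and> x < v)) \<longrightarrow> card {i\<in>A g. u < yW i \<and> yW i < v} \<le> q g)"
    by blast
  have Yf: "\<And>g. finite (Yf g)" "\<And>g. card (Yf g) \<le> card (A g) div Suc (q g)"
    "\<And>g u v. (\<forall>x\<in>Yf g. \<not> (u < x \<and> x < v)) \<Longrightarrow> card {i\<in>A g. u < yW i \<and> yW i < v} \<le> q g"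
    using Yf0 by blast+
  have cdiv: "real (card (A g) div Suc (q g)) \<le> 4 / \<delta>" for g
  proof -
    have m1: "\<delta> * real (n g) < real (m g) + 1"
      unfolding m_def using dpos by (simp add: floor_less_iff)
    have m2: "m g + 1 \<le> 4 * Suc (q g)" unfolding q_def by presburger
    have "real (m g + 1) \<le> real (4 * Suc (q g))" using m2 by (simp only: of_nat_le_iff)
    then have "real (m g) + 1 \<le> 4 * real (Suc (q g))" by simp
    then have "\<delta> * real (n g) < 4 * real (Suc (q g))" using m1 by linarith
    then have "real (n g) < 4 / \<delta> * real (Suc (q g))" using dpos
      by (simp add: field_simps)
    then have "real (n g) / real (Suc (q g)) \<le> 4 / \<delta>"
      by (simp add: divide_le_eq)
    moreover have "real (card (A g) div Suc (q g)) \<le> real (n g) / real (Suc (q g))"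
      unfolding n_def by (rule of_nat_div_le_of_nat)
    ultimately show ?thesis by linarith
  qed
  define P where "P = {(c', p'). row_class eps Ws c' p' \<noteq> {}}"
  have PG: "P \<subseteq> G" using GP unfolding P_def .
  have fP: "finite P" using finite_subset[OF PG fG] .
  have cPG: "card P \<le> card G" using card_mono[OF fG PG] .
  define Xall where "Xall = {a, b} \<union> {z \<in> \<Union>(Xf ` P). a < z \<and> z < b}"
  define Yall where "Yall = insert 0 (\<Union>(Yf ` P))"
  have fXall: "finite Xall" unfolding Xall_def using fP Xf(1) by auto
  have fYall: "finite Yall" unfolding Yall_def using fP Yf(1) by auto
  have aX: "a \<in> Xall" and bX: "b \<in> Xall" unfolding Xall_def by auto
  have Xab: "Xall \<subseteq> {a..b}" unfolding Xall_def using ab by auto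
  have Y0: "0 \<in> Yall" unfolding Yall_def by auto
  define \<Gamma> where "\<Gamma> = K * real (card G) * log 2 (real T) / eps"
  have Gnn: "0 \<le> \<Gamma>" unfolding \<Gamma>_def using K eps logT by simp
  have G8: "real (card G) * (4 / \<delta>) = 8 * \<Gamma>"
    unfolding \<Gamma>_def \<delta>_def using eps K logT by (simp add: field_simps)
  have sumX: "real (\<Sum>g\<in>P. card (Xf g)) \<le> 8 * \<Gamma>"
  proof -
    have "real (\<Sum>g\<in>P. card (Xf g)) = (\<Sum>g\<in>P. real (card (Xf g)))" by simp
    also have "\<dots> \<le> (\<Sum>g\<in>P. 4 / \<delta>)"
      by (rule sum_mono) (use Xf(2) cdiv order_trans of_nat_le_iff in blast)
    also have "\<dots> = real (card P) * (4 / \<delta>)" by simp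
    also have "\<dots> \<le> real (card G) * (4 / \<delta>)" using cPG dpos by (intro mult_right_mono) auto
    finally show ?thesis using G8 by simp
  qed
  have sumY: "real (\<Sum>g\<in>P. card (Yf g)) \<le> 8 * \<Gamma>"
  proof -
    have "real (\<Sum>g\<in>P. card (Yf g)) = (\<Sum>g\<in>P. real (card (Yf g)))" by simp
    also have "\<dots> \<le> (\<Sum>g\<in>P. 4 / \<delta>)"
      by (rule sum_mono) (use Yf(2) cdiv order_trans of_nat_le_iff in blast)
    also have "\<dots> = real (card P) * (4 / \<delta>)" by simp
    also have "\<dots> \<le> real (card G) * (4 / \<delta>)" using cPG dpos by (intro mult_right_mono) auto
    finally show ?thesis using G8 by simp
  qed
  have cX: "real (card Xall) \<le> 2 + 8 * \<Gamma>"
  proof -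
    have "card Xall \<le> card {a, b} + card {z \<in> \<Union>(Xf ` P). a < z \<and> z < b}"
      unfolding Xall_def by (rule card_Un_le)
    also have "\<dots> \<le> 2 + card (\<Union>(Xf ` P))"
      using fP Xf(1) by (intro add_mono card_mono) (auto simp: card_insert_if)
    also have "\<dots> \<le> 2 + (\<Sum>g\<in>P. card (Xf g))" using card_UN_le[OF fP] by simp
    finally have "real (card Xall) \<le> 2 + real (\<Sum>g\<in>P. card (Xf g))" by linarith
    then show ?thesis using sumX by linarith
  qed
  have cY: "real (card Yall) \<le> 1 + 8 * \<Gamma>"
  proof -
    have "card Yall \<le> Suc (card (\<Union>(Yf ` P)))" unfolding Yall_def using fP Yf(1) by (simp add: card_insert_if)
    also have "\<dots> \<le> 1 + (\<Sum>g\<in>P. card (Yf g))" using card_UN_le[OF fP] by simp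
    finally have "real (card Yall) \<le> 1 + real (\<Sum>g\<in>P. card (Yf g))" by linarith
    then show ?thesis using sumY by linarith
  qed
  define k where "k = (card Xall - 1) * card Yall"
  have kb: "real k \<le> 81 * max 1 ((K * real (card G) * log 2 (real T) / eps) ^ 2)"
  proof -
    have c1: "1 \<le> card Xall" using aX fXall card_0_eq by fastforce
    have x1: "real (card Xall - 1) \<le> 1 + 8 * \<Gamma>" using cX c1 by (simp add: of_nat_diff)
    have "real k = real (card Xall - 1) * real (card Yall)" unfolding k_def by simp
    also have "\<dots> \<le> (1 + 8 * \<Gamma>) * (1 + 8 * \<Gamma>)"
      using x1 cY Gnn by (intro mult_mono) auto
    also have "\<dots> \<le> 81 * max 1 (\<Gamma> ^ 2)"
    proof (cases "\<Gamma> \<le> 1")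
      case True
      then have "(1 + 8 * \<Gamma>) * (1 + 8 * \<Gamma>) \<le> 9 * 9" using Gnn by (intro mult_mono) auto
      then show ?thesis by (smt (verit) max.cobounded1)
    next
      case False
      then have "(1 + 8 * \<Gamma>) * (1 + 8 * \<Gamma>) \<le> (9 * \<Gamma>) * (9 * \<Gamma>)" using Gnn by (intro mult_mono) auto
      then show ?thesis by (simp add: power2_eq_square)
    qed
    finally show ?thesis unfolding \<Gamma>_def .
  qed
  define f where "f = (\<lambda>p::nat \<times> nat. \<Phi> (Min {x\<in>Xall. fst p < x} - 1) (Max {y\<in>Yall. y \<le> snd p}))"
  have stepf: "step_function_on a b f k"
    unfolding f_def k_def using grid_step[OF fXall fYall aX bX Xab ab Y0, of "\<lambda>x y. \<Phi> (x - 1) y"] by simp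
  have pt: "f (t, s) \<le> (\<Sum>R\<in>\<Union>Ws. val R)
             \<and> f (t, s) \<le> (\<Sum>R\<in>{R\<in>S. hits_ray R s t}. val R)
             \<and> real (\<Sum>R\<in>{R\<in>S. hits_ray R s t}. val R)
                 \<le> real (f (t, s))
                   + (\<Sum>(c', p')\<in>{(c', p'). \<exists>W\<in>row_class eps Ws c' p'. \<exists>R\<in>W. hits_ray R s t}.
                        (1 + eps) powr (real_of_int p')
                        * of_int \<lfloor>eps / (2 * K * log 2 (real T))
                             * real (card {W \<in> row_class eps Ws c' p'. W \<inter> S \<noteq> {}})\<rfloor>)"
    if tab: "a \<le> t \<and> t < b" for t s
  proof -
    have at: "a \<le> t" "t < b" using tab by auto
    define nx where "nx = Min {x\<in>Xall. t < x}"
    define py where "py = Max {y\<in>Yall. y \<le> s}"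
    have fx: "finite {x\<in>Xall. t < x}" using fXall by auto
    have nex: "{x\<in>Xall. t < x} \<noteq> {}" using bX at by auto
    have nx: "nx \<in> Xall" "t < nx" "\<forall>z\<in>Xall. t < z \<longrightarrow> nx \<le> z"
      using Min_in[OF fx nex] Min_le[OF fx] unfolding nx_def by auto
    have nxb: "nx \<le> b" using nx(3) bX at by auto
    have fy: "finite {y\<in>Yall. y \<le> s}" using fYall by auto
    have ney: "{y\<in>Yall. y \<le> s} \<noteq> {}" using Y0 by auto
    have py: "py \<in> Yall" "py \<le> s" "\<forall>z\<in>Yall. z \<le> s \<longrightarrow> z \<le> py"
      using Max_in[OF fy ney] Max_ge[OF fy] unfolding py_def by auto
    have fdef: "f (t, s) = \<Phi> (nx - 1) py" unfolding f_def nx_def py_def by simp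
    define Hs where "Hs = {W\<in>Ws'. yW W \<le> s \<and> t < eW W}"
    define Hf where "Hf = {W\<in>Ws'. yW W \<le> py \<and> nx - 1 < eW W}"
    have HfHs: "Hf \<subseteq> Hs" unfolding Hf_def Hs_def using py(2) nx(2) by auto
    have fHs: "finite Hs" unfolding Hs_def using fWs' by auto
    have Fs: "(\<Sum>R\<in>{R\<in>S. hits_ray R s t}. val R) = sum vW Hs"
      using F2[OF at(1), of s] unfolding \<Phi>_def Hs_def by simp
    have fs: "f (t, s) = sum vW Hf" unfolding fdef \<Phi>_def Hf_def by simp
    have f_le: "f (t, s) \<le> (\<Sum>R\<in>{R\<in>S. hits_ray R s t}. val R)"
      unfolding Fs fs by (rule sum_mono2[OF fHs HfHs]) simp
    have tot: "(\<Sum>R\<in>{R\<in>S. hits_ray R s t}. val R) \<le> (\<Sum>R\<in>\<Union>Ws. val R)"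
      by (rule sum_mono2[OF fUW]) (use SW in auto)
    define D where "D = Hs - Hf"
    have fD: "finite D" unfolding D_def using fHs by auto
    have split: "sum vW Hs = sum vW D + sum vW Hf"
      unfolding D_def by (rule sum.subset_diff[OF HfHs fHs])
    define Hit where "Hit = {(c', p'). \<exists>W\<in>row_class eps Ws c' p'. \<exists>R\<in>W. hits_ray R s t}"
    have HitP: "Hit \<subseteq> P" unfolding Hit_def P_def by auto
    have fHit: "finite Hit" using finite_subset[OF HitP fP] .
    have img: "cls ` D \<subseteq> Hit"
    proof
      fix g assume "g \<in> cls ` D"
      then obtain W where W: "W \<in> D" "g = cls W" by auto
      obtain c' p' where g: "g = (c', p')" by fastforce
      have WW: "W \<in> Ws'" and Wh: "yW W \<le> s \<and> t < eW W" using W(1) unfolding D_def Hs_def by auto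
      have Ws: "W \<in> Ws" using WW unfolding Ws'_def by auto
      have "W \<in> row_class eps Ws c' p'" using cls_iff[OF Ws] W(2) g by simp
      moreover obtain R where "R \<in> W \<inter> S" "hits_ray R s t" using F1[OF WW at(1)] Wh by blast
      ultimately show "g \<in> Hit" unfolding Hit_def g by blast
    qed
    have grp: "sum vW D = (\<Sum>g\<in>Hit. sum vW {W\<in>D. cls W = g})"
      using sum.group[OF fD fHit img, of vW] by simp
    have per: "real (sum vW {W\<in>D. cls W = g}) \<le> (case g of (c', p') \<Rightarrow>
                        (1 + eps) powr (real_of_int p')
                        * of_int \<lfloor>eps / (2 * K * log 2 (real T))
                             * real (card {W \<in> row_class eps Ws c' p'. W \<inter> S \<noteq> {}})\<rfloor>)"
      if gH: "g \<in> Hit" for g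
    proof -
      obtain c' p' where g: "g = (c', p')" by fastforce
      have gP: "g \<in> P" using gH HitP by auto
      define Dg where "Dg = {W\<in>D. cls W = g}"
      define Y1 where "Y1 = {W\<in>A g. py < yW W \<and> yW W < Suc s}"
      define X1 where "X1 = {W\<in>A g. t < eW W \<and> eW W < nx}"
      have sub: "Dg \<subseteq> Y1 \<union> X1"
      proof
        fix W assume W: "W \<in> Dg"
        have a1: "W \<in> A g" using W unfolding Dg_def D_def Hs_def A_def by auto
        have a2: "yW W \<le> s" "t < eW W" using W unfolding Dg_def D_def Hs_def by auto
        have a3: "\<not> (yW W \<le> py \<and> nx - 1 < eW W)" using W a1 unfolding Dg_def D_def Hf_def A_def by auto
        show "W \<in> Y1 \<union> X1"
        proof (cases "yW W \<le> py")
          case True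
          then have "eW W < nx" using a3 nx(2) by auto
          then show ?thesis using a1 a2 unfolding X1_def by auto
        next
          case False
          then show ?thesis using a1 a2 unfolding Y1_def by auto
        qed
      qed
      have cY1: "card Y1 \<le> q g"
      proof -
        have "\<forall>x\<in>Yf g. \<not> (py < x \<and> x < Suc s)"
        proof
          fix x assume "x \<in> Yf g"
          then have "x \<in> Yall" using gP unfolding Yall_def by auto
          then show "\<not> (py < x \<and> x < Suc s)" using py(3) by auto
        qed
        then show ?thesis unfolding Y1_def by (rule Yf(3))
      qed
      have cX1: "card X1 \<le> q g"
      proof -
        have "\<forall>x\<in>Xf g. \<not> (t < x \<and> x < nx)"
        proof
          fix x assume x: "x \<in> Xf g"
          show "\<not> (t < x \<and> x < nx)"
          proof
            assume h: "t < x \<and> x < nx"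
            then have "x \<in> Xall" using x gP at nxb unfolding Xall_def by auto
            then show False using nx(3) h by auto
          qed
        qed
        then show ?thesis unfolding X1_def by (rule Xf(3))
      qed
      have fY1: "finite Y1" "finite X1" unfolding Y1_def X1_def using fA by auto
      have cDg: "card Dg \<le> 2 * q g"
      proof -
        have "card Dg \<le> card (Y1 \<union> X1)" using sub fY1 by (intro card_mono) auto
        also have "\<dots> \<le> card Y1 + card X1" by (rule card_Un_le)
        finally show ?thesis using cY1 cX1 by linarith
      qed
      define L where "L = (1 + eps) powr (real_of_int p')"
      have Lpos: "0 < L" unfolding L_def using eps by simp
      have vb: "real (vW W) \<le> 2 * L" if "W \<in> Dg" for W
      proof -
        have WW: "W \<in> Ws'" and c: "cls W = (c', p')" using that g unfolding Dg_def D_def Hs_def by auto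
        have Ws: "W \<in> Ws" using WW unfolding Ws'_def by auto
        have "\<lfloor>log (1 + eps) (real (vW W))\<rfloor> = p'" using c unfolding cls_def by simp
        then have "real (vW W) < (1 + eps) powr (real_of_int (p' + 1))"
          using floor_log_eq_powr_iff[OF vpos[OF Ws], of "1 + eps" p'] eps by simp
        also have "\<dots> = L * (1 + eps)" unfolding L_def using eps by (simp add: powr_add)
        also have "\<dots> \<le> L * 2" using Lpos eps by (intro mult_left_mono) auto
        finally show ?thesis by simp
      qed
      have fDg: "finite Dg" unfolding Dg_def using fD by auto
      have "real (sum vW Dg) = (\<Sum>W\<in>Dg. real (vW W))" by simp
      also have "\<dots> \<le> (\<Sum>W\<in>Dg. 2 * L)" by (rule sum_mono) (use vb in auto)
      also have "\<dots> = real (card Dg) * (2 * L)" by simp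
      also have "\<dots> \<le> real (2 * q g) * (2 * L)" using cDg Lpos by (intro mult_right_mono) auto
      also have "\<dots> = real (4 * q g) * L" by simp
      also have "\<dots> \<le> real (m g) * L"
      proof -
        have "4 * q g \<le> m g" unfolding q_def by simp
        then show ?thesis using Lpos by (intro mult_right_mono) auto
      qed
      also have "\<dots> = L * of_int \<lfloor>\<delta> * real (n g)\<rfloor>"
      proof -
        have "0 \<le> \<lfloor>\<delta> * real (n g)\<rfloor>" using dpos by simp
        then have "real (m g) = of_int \<lfloor>\<delta> * real (n g)\<rfloor>" unfolding m_def by simp
        then show ?thesis by simp
      qed
      finally show ?thesis unfolding Dg_def g L_def \<delta>_def using n_eq by simp
    qed
    have "real (sum vW D) = (\<Sum>g\<in>Hit. real (sum vW {W\<in>D. cls W = g}))" unfolding grp by simp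
    also have "\<dots> \<le> (\<Sum>g\<in>Hit. (case g of (c', p') \<Rightarrow>
                        (1 + eps) powr (real_of_int p')
                        * of_int \<lfloor>eps / (2 * K * log 2 (real T))
                             * real (card {W \<in> row_class eps Ws c' p'. W \<inter> S \<noteq> {}})\<rfloor>))"
      by (rule sum_mono) (rule per)
    finally have err: "real (sum vW D) \<le> (\<Sum>(c', p')\<in>Hit.
                        (1 + eps) powr (real_of_int p')
                        * of_int \<lfloor>eps / (2 * K * log 2 (real T))
                             * real (card {W \<in> row_class eps Ws c' p'. W \<inter> S \<noteq> {}})\<rfloor>)" .
    have "real (\<Sum>R\<in>{R\<in>S. hits_ray R s t}. val R) = real (f (t, s)) + real (sum vW D)"
      unfolding Fs fs split by simp
    then show ?thesis using err f_le tot unfolding Hit_def by linarith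
  qed
  show ?thesis
    by (rule exI[of _ f], rule exI[of _ k]) (use stepf kb pt in blast)
qed


theorem lemma19:
  "\<exists>C>0. \<forall>(eps::real) (K::real) (T::nat) (a::nat) (b::nat) (I::rect set)
      (Ws::rect set set) (G::(real \<times> int) set) (S::rect set).
     0 < eps \<and> eps < 1 \<and> K \<ge> 1 \<and> T \<ge> 2 \<and> a < b
     \<and> rcp_instance I \<and> Ws \<subseteq> rows I \<and> finite Ws
     \<and> (\<forall>W\<in>Ws. \<exists>R\<in>W. \<exists>R'\<in>W. left R \<le> a \<and> b \<le> right R')
     \<and> finite G \<and> {(c', p'). row_class eps Ws c' p' \<noteq> {}} \<subseteq> G
     \<and> S \<subseteq> \<Union>Ws
     \<and> (\<forall>W\<in>Ws. \<forall>R\<in>S \<inter> W. \<forall>R'\<in>W. right R' \<le> left R \<longrightarrow> R' \<in> S)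
     \<longrightarrow> (\<exists>(f::nat \<times> nat \<Rightarrow> nat) k.
            step_function_on a b f k
          \<and> real k \<le> C * max 1 ((K * real (card G) * log 2 (real T) / eps) ^ 2)
          \<and> (\<forall>t s. a \<le> t \<and> t < b \<longrightarrow>
               f (t, s) \<le> (\<Sum>R\<in>\<Union>Ws. val R)
             \<and> f (t, s) \<le> (\<Sum>R\<in>{R\<in>S. hits_ray R s t}. val R)
             \<and> real (\<Sum>R\<in>{R\<in>S. hits_ray R s t}. val R)
                 \<le> real (f (t, s))
                   + (\<Sum>(c', p')\<in>{(c', p'). \<exists>W\<in>row_class eps Ws c' p'. \<exists>R\<in>W. hits_ray R s t}.
                        (1 + eps) powr (real_of_int p')
                        * of_int \<lfloor>eps / (2 * K * log 2 (real T))
                             * real (card {W \<in> row_class eps Ws c' p'. W \<inter> S \<noteq> {}})\<rfloor>)))"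
  proof (intro exI[of _ "81::real"] conjI allI impI)
  show "(0::real) < 81" by simp
next
  fix eps K :: real and T a b :: nat and I :: "rect set" and Ws :: "rect set set"
    and G :: "(real \<times> int) set" and S :: "rect set"
  assume H: "0 < eps \<and> eps < 1 \<and> K \<ge> 1 \<and> T \<ge> 2 \<and> a < b
     \<and> rcp_instance I \<and> Ws \<subseteq> rows I \<and> finite Ws
     \<and> (\<forall>W\<in>Ws. \<exists>R\<in>W. \<exists>R'\<in>W. left R \<le> a \<and> b \<le> right R')
     \<and> finite G \<and> {(c', p'). row_class eps Ws c' p' \<noteq> {}} \<subseteq> G
     \<and> S \<subseteq> \<Union>Ws
     \<and> (\<forall>W\<in>Ws. \<forall>R\<in>S \<inter> W. \<forall>R'\<in>W. right R' \<le> left R \<longrightarrow> R' \<in> S)"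
  show "\<exists>(f::nat \<times> nat \<Rightarrow> nat) k.
            step_function_on a b f k
          \<and> real k \<le> 81 * max 1 ((K * real (card G) * log 2 (real T) / eps) ^ 2)
          \<and> (\<forall>t s. a \<le> t \<and> t < b \<longrightarrow>
               f (t, s) \<le> (\<Sum>R\<in>\<Union>Ws. val R)
             \<and> f (t, s) \<le> (\<Sum>R\<in>{R\<in>S. hits_ray R s t}. val R)
             \<and> real (\<Sum>R\<in>{R\<in>S. hits_ray R s t}. val R)
                 \<le> real (f (t, s))
                   + (\<Sum>(c', p')\<in>{(c', p'). \<exists>W\<in>row_class eps Ws c' p'. \<exists>R\<in>W. hits_ray R s t}.
                        (1 + eps) powr (real_of_int p')
                        * of_int \<lfloor>eps / (2 * K * log 2 (real T))
                             * real (card {W \<in> row_class eps Ws c' p'. W \<inter> S \<noteq> {}})\<rfloor>))"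
    using H by (intro main19) auto
qed

end
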